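(* If $n$ is a non-negative integer and $s$ is a complex number that is not a negative integer, then $$\sum_{k = 1}^n \sum_{j = 0}^{k - 1} \frac{(- 1)^j s}{k - j} \binom{s}{n - j} = s\binom{s - 1}{n} H_n + \binom{s - 1}{n} - (- 1)^n.$$
   Context: For complex $s$ and non-negative integer $m$, $\binom{s}{m}=\frac{s(s-1)\cdots(s-m+1)}{m!}$. $H_n=\sum_{i=1}^n\frac1i$. Empty sums are zero. *)

theory Defs
  imports "HOL-Analysis.Analysis"
begin

end

theory Submission
  imports Defs
begin

lemma alg:
  fixes s C D E H p N :: complex
  assumes "N \<noteq> 0" "E = D + C" "N * D = s * C - N * C"
  shows "p * (s * C * H + C - p) + s * (- p * E * (H + inverse N))
       = - p * (s * D * (H + inverse N) + D - - p)"
proof -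
  have "s * C = N * (C + D)" using assms(3) by (simp add: algebra_simps)
  then have "s * C * inverse N = C + D" using assms(1) by (simp add: field_simps)
  then show ?thesis using assms(2) by (simp add: algebra_simps) (metis distrib_left mult.assoc mult.commute)
qed

lemma key:
  fixes s :: complex
  shows "s * (\<Sum>i=1..n. (-1)^i * (s gchoose i) * harm i)
       = (-1)^n * (s * ((s - 1) gchoose n) * harm n + ((s - 1) gchoose n) - (-1)^n)"
proof (induction n)
  case 0
  then show ?case by (simp add: harm_def)
next
  case (Suc n)
  let ?C = "(s - 1) gchoose n" and ?D = "(s - 1) gchoose Suc n" and ?E = "s gchoose Suc n"
  have add: "?E = ?D + ?C" by (rule gbinomial_addition_formula)
  have abs: "of_nat (Suc n) * ?E = s * ?C" by (rule gbinomial_absorption)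
  have D: "of_nat (Suc n) * ?D = s * ?C - of_nat (Suc n) * ?C"
    using add abs by (simp add: algebra_simps)
  have nz: "(of_nat (Suc n) :: complex) \<noteq> 0" by (metis of_nat_eq_0_iff nat.distinct(1))
  have h: "harm (Suc n) = harm n + inverse (of_nat (Suc n) :: complex)" by (rule harm_Suc)
  have "s * (\<Sum>i=1..Suc n. (-1)^i * (s gchoose i) * harm i)
      = s * (\<Sum>i=1..n. (-1)^i * (s gchoose i) * harm i) + s * ((-1)^Suc n * ?E * harm (Suc n))"
    by (simp add: algebra_simps)
  also have "\<dots> = (-1)^n * (s * ?C * harm n + ?C - (-1)^n) + s * ((-1)^Suc n * ?E * harm (Suc n))"
    using Suc.IH by simp
  also have "\<dots> = (-1)^Suc n * (s * ?D * harm (Suc n) + ?D - (-1)^Suc n)"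
  proof -
    show ?thesis unfolding h power_Suc
      using alg[OF nz add D, where H="harm n" and p="(-1)^n"] by simp
  qed
  finally show ?case .
qed

lemma swap:
  fixes f :: "nat \<Rightarrow> nat \<Rightarrow> complex"
  shows "(\<Sum>k=1..n. \<Sum>j=0..k-1. f j k) = (\<Sum>j=0..<n. \<Sum>k=Suc j..n. f j k)"
proof (induction n)
  case 0
  then show ?case by simp
next
  case (Suc n)
  have "(\<Sum>k=1..Suc n. \<Sum>j=0..k-1. f j k) = (\<Sum>k=1..n. \<Sum>j=0..k-1. f j k) + (\<Sum>j=0..n. f j (Suc n))"
    by simp
  also have "\<dots> = (\<Sum>j=0..<n. \<Sum>k=Suc j..n. f j k) + (\<Sum>j=0..<n. f j (Suc n)) + f n (Suc n)"
    using Suc.IH by (simp add: atLeast0AtMost atLeast0LessThan lessThan_Suc_atMost[symmetric])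
  also have "\<dots> = (\<Sum>j=0..<Suc n. \<Sum>k=Suc j..Suc n. f j k)"
    by (simp add: sum.distrib)
  finally show ?case .
qed

lemma inner:
  assumes "j < n"
  shows "(\<Sum>k=Suc j..n. 1 / (of_nat (k - j) :: complex)) = harm (n - j)"
proof -
  have "(\<Sum>k=Suc j..n. 1 / (of_nat (k - j) :: complex)) = (\<Sum>k=1+j..(n-j)+j. 1 / of_nat (k - j))"
    using assms by simp
  also have "\<dots> = (\<Sum>m=1..n-j. 1 / (of_nat m :: complex))"
    by (subst sum.shift_bounds_cl_nat_ivl) simp
  finally show ?thesis by (simp add: harm_def inverse_eq_divide)
qed

theorem proposition21:
  fixes n :: nat and s :: complex
  assumes "\<forall>m::nat. s \<noteq> - of_nat (Suc m)"
  shows "(\<Sum>k=1..n. \<Sum>j=0..k-1. (-1)^j * s / of_nat (k - j) * (s gchoose (n - j)))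
       = s * ((s - 1) gchoose n) * harm n + ((s - 1) gchoose n) - (-1)^n"
proof -
  have "(\<Sum>k=1..n. \<Sum>j=0..k-1. (-1)^j * s / of_nat (k - j) * (s gchoose (n - j)))
      = (\<Sum>j=0..<n. \<Sum>k=Suc j..n. (-1)^j * s / of_nat (k - j) * (s gchoose (n - j)))"
    by (rule swap)
  also have "\<dots> = (\<Sum>j=0..<n. (-1)^j * s * (s gchoose (n - j)) * (\<Sum>k=Suc j..n. 1 / of_nat (k - j)))"
    by (simp add: sum_distrib_left)
  also have "\<dots> = (\<Sum>j=0..<n. (-1)^j * s * (s gchoose (n - j)) * harm (n - j))"
  proof (rule sum.cong[OF refl])
    fix j assume "j \<in> {0..<n}"
    then have "j < n" by simp
    then show "(-1)^j * s * (s gchoose (n - j)) * (\<Sum>k=Suc j..n. 1 / of_nat (k - j))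
        = (-1)^j * s * (s gchoose (n - j)) * harm (n - j)"
      by (simp only: inner)
  qed
  also have "\<dots> = (\<Sum>i=1..n. (-1)^(n-i) * s * (s gchoose i) * harm i)"
  proof (rule sum.reindex_bij_witness[of _ "\<lambda>i. n - i" "\<lambda>j. n - j"])
  qed auto
  also have "\<dots> = (-1)^n * (s * (\<Sum>i=1..n. (-1)^i * (s gchoose i) * harm i))"
  proof -
    have "\<And>i. i \<in> {1..n} \<Longrightarrow> (-1::complex)^(n-i) = (-1)^n * (-1)^i"
    proof -
      fix i assume "i \<in> {1..n}"
      then have "n = (n - i) + i" by simp
      then have "(-1::complex)^n = (-1)^(n-i) * (-1)^i" by (metis power_add)
      then have "(-1::complex)^n * (-1)^i = (-1)^(n-i) * ((-1)^i * (-1)^i)" by (simp add: algebra_simps)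
      also have "(-1::complex)^i * (-1)^i = 1" by (simp flip: power_add)
      finally show "(-1::complex)^(n-i) = (-1)^n * (-1)^i" by simp
    qed
    then have "(\<Sum>i=1..n. (-1)^(n-i) * s * (s gchoose i) * harm i)
        = (\<Sum>i=1..n. (-1)^n * (s * ((-1)^i * (s gchoose i) * harm i)))"
      by (intro sum.cong) (simp_all add: algebra_simps)
    then show ?thesis
      by (simp add: sum_distrib_left)
  qed
  also have "\<dots> = s * ((s - 1) gchoose n) * harm n + ((s - 1) gchoose n) - (-1)^n"
    unfolding key by (simp flip: mult.assoc power_add)
  finally show ?thesis .
qed

end
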